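(* Let $f:(\mathbb R^2,q)\to(\mathbb R^3,p)$ be a smooth map germ with a corank 1 singularity at $q$, with curvature parabola $\Delta_p$, axial vector $v_a$, adapted frame $\{v_a,\nu_2\}$ and axial normal curvature function $K_{v_a}(y)=\langle\eta(y),v_a\rangle$, and suppose $\kappa_a(p)$ is defined. Then $\kappa_a(p)=0$ if and only if either $\Delta_p$ is a point, or $\eta(y_0)$ is parallel to $\nu_2$, where $y_0$ is a critical point of $K_{v_a}$.
   Context: Let $f:(\mathbb R^2,q)\to(\mathbb R^3,p)$ be a smooth germ with $\operatorname{rank} df_q=1$; $M$ is its image. $T_pM=\operatorname{im} df_q$ and $N_pM$ is its orthogonal complement (normal plane), with a fixed orientation. The first fundamental form is $I(X,Y)=\langle df_q X,df_qY\rangle$ on $T_q\mathbb R^2$. The second fundamental form $II:T_q\mathbb R^2\times T_q\mathbb R^2\to N_pM$ is the symmetric bilinear map with $II(\partial_u,\partial_u)=f_{uu}(q)^\perp$, $II(\partial_u,\partial_v)=f_{uv}(q)^\perp$, $II(\partial_v,\partial_v)=f_{vv}(q)^\perp$ ($\perp$ = orthogonal projection onto $N_pM$). With $C_q=\{X: I(X,X)=1\}$, the curvature parabola is $\Delta_p=\{II(X,X):X\in C_q\}$. Choosing coordinates with $f_v(q)=0$, $|f_u(q)|=1$, $C_q=\{\pm(\partial_u+y\partial_v)\}$ and $\Delta_p$ is parametrized by $\eta(y)=II(\partial_u+y\partial_v,\partial_u+y\partial_v)$, $y\in\mathbb R$; $\Delta_p$ is a non-degenerate parabola, a half-line, a line,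 or a point. If $\Delta_p$ is a line or half-line, set $\eta(y_\infty)=\eta'(y)/|\eta'(y)|$ for any $y>0$ with $\eta'(y)\neq0$. Axial vector $v_a\in N_pM$: if $\Delta_p$ is a non-degenerate parabola, let $v_d$ be the unit vector in the direction of its directrix and $v_a$ the unit vector with $\{v_a,v_d\}$ a positively oriented orthonormal frame (so $v_a$ points along the axis of symmetry towards the interior of the parabola); if $\Delta_p$ is a line or half-line, $v_a=\eta(y_\infty)$; if $\Delta_p$ is a point other than the origin, $v_a$ is such that $\{v_a,\eta/|\eta|\}$ is a positively oriented orthonormal frame; if $\Delta_p$ is the origin, $v_a$ is any unit vector. The adapted frame is $\{v_a,\nu_2\}$, the positively oriented orthonormal frame of $N_pM$ containing $v_a$. The axial curvature is $\kappa_a(p)=\min\{\langle\eta(y),v_a\rangle: y\in\mathbb R\}$, when this minimum exists (it does not when $\Delta_p$ is a line). *)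

theory Defs
  imports "HOL-Analysis.Analysis"
begin

fun Ck :: "nat \<Rightarrow> ('a::real_normed_vector \<Rightarrow> 'b::real_normed_vector) \<Rightarrow> 'a set \<Rightarrow> bool" where
  "Ck 0 f U = continuous_on U f"
| "Ck (Suc k) f U = (f differentiable_on U \<and> (\<forall>h. Ck k (\<lambda>x. frechet_derivative f (at x) h) U))"

definition smooth_on :: "'a::real_normed_vector set \<Rightarrow> ('a \<Rightarrow> 'b::real_normed_vector) \<Rightarrow> bool" where
  "smooth_on U f = (\<forall>k. Ck k f U)"

definition smooth_germ :: "(real \<times> real \<Rightarrow> real^3) \<Rightarrow> real \<times> real \<Rightarrow> bool" where
  "smooth_germ f q = (\<exists>U. open U \<and> q \<in> U \<and> smooth_on U f)"

definition dfq :: "(real \<times> real \<Rightarrow> real^3) \<Rightarrow> real \<times> real \<Rightarrow> real \<times> real \<Rightarrow> real^3" where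
  "dfq f q = frechet_derivative f (at q)"

definition rank_df :: "(real \<times> real \<Rightarrow> real^3) \<Rightarrow> real \<times> real \<Rightarrow> nat" where
  "rank_df f q = dim (range (dfq f q))"

definition D2f :: "(real \<times> real \<Rightarrow> real^3) \<Rightarrow> real \<times> real \<Rightarrow> real \<times> real \<Rightarrow> real \<times> real \<Rightarrow> real^3" where
  "D2f f q X Y = frechet_derivative (\<lambda>x. frechet_derivative f (at x) Y) (at q) X"

definition TpM :: "(real \<times> real \<Rightarrow> real^3) \<Rightarrow> real \<times> real \<Rightarrow> (real^3) set" where
  "TpM f q = range (dfq f q)"

definition NpM :: "(real \<times> real \<Rightarrow> real^3) \<Rightarrow> real \<times> real \<Rightarrow> (real^3) set" where
  "NpM f q = {w. \<forall>t \<in> TpM f q. w \<bullet> t = 0}"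

definition nproj :: "(real \<times> real \<Rightarrow> real^3) \<Rightarrow> real \<times> real \<Rightarrow> real^3 \<Rightarrow> real^3" where
  "nproj f q w = (THE n. n \<in> NpM f q \<and> w - n \<in> TpM f q)"

definition FFI :: "(real \<times> real \<Rightarrow> real^3) \<Rightarrow> real \<times> real \<Rightarrow> real \<times> real \<Rightarrow> real \<times> real \<Rightarrow> real" where
  "FFI f q X Y = dfq f q X \<bullet> dfq f q Y"

definition FFII :: "(real \<times> real \<Rightarrow> real^3) \<Rightarrow> real \<times> real \<Rightarrow> real \<times> real \<Rightarrow> real \<times> real \<Rightarrow> real^3" where
  "FFII f q X Y = nproj f q (D2f f q X Y)"

text \<open>Curvature parabola Delta_p and its parametrization eta (in the adapted coordinates).\<close>
definition curvature_parabola :: "(real \<times> real \<Rightarrow> real^3) \<Rightarrow> real \<times> real \<Rightarrow> (real^3) set" where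
  "curvature_parabola f q = {FFII f q X X | X. FFI f q X X = 1}"

definition eta :: "(real \<times> real \<Rightarrow> real^3) \<Rightarrow> real \<times> real \<Rightarrow> real \<Rightarrow> real^3" where
  "eta f q y = FFII f q (1, y) (1, y)"

definition is_point_set :: "(real^3) set \<Rightarrow> bool" where
  "is_point_set S = (\<exists>P. S = {P})"

definition is_line_set :: "(real^3) set \<Rightarrow> bool" where
  "is_line_set S = (\<exists>P d. d \<noteq> 0 \<and> S = {P + t *\<^sub>R d | t. True})"

definition is_halfline_set :: "(real^3) set \<Rightarrow> bool" where
  "is_halfline_set S = (\<exists>P d. d \<noteq> 0 \<and> S = {P + t *\<^sub>R d | t. t \<ge> 0})"

text \<open>S is a non-degenerate parabola whose axis of symmetry has unit direction e pointing
  towards the interior (opening direction).\<close>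
definition nd_parabola_with_axis :: "(real^3) set \<Rightarrow> real^3 \<Rightarrow> bool" where
  "nd_parabola_with_axis S e = (\<exists>V d k. norm e = 1 \<and> norm d = 1 \<and> d \<bullet> e = 0 \<and> k > 0 \<and>
      S = {V + t *\<^sub>R d + (k * t\<^sup>2) *\<^sub>R e | t. True})"

definition is_nd_parabola :: "(real^3) set \<Rightarrow> bool" where
  "is_nd_parabola S = (\<exists>e. nd_parabola_with_axis S e)"

text \<open>Orientation of N_pM fixed by a positively oriented orthonormal basis (e1,e2);
  (w1,w2) is positively oriented iff its determinant w.r.t. (e1,e2) is positive.\<close>
definition oriented_normal_basis :: "(real \<times> real \<Rightarrow> real^3) \<Rightarrow> real \<times> real \<Rightarrow> real^3 \<Rightarrow> real^3 \<Rightarrow> bool" where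
  "oriented_normal_basis f q e1 e2 = (e1 \<in> NpM f q \<and> e2 \<in> NpM f q \<and> norm e1 = 1 \<and> norm e2 = 1 \<and> e1 \<bullet> e2 = 0)"

definition pos_oriented :: "real^3 \<Rightarrow> real^3 \<Rightarrow> real^3 \<Rightarrow> real^3 \<Rightarrow> bool" where
  "pos_oriented e1 e2 w1 w2 = ((w1 \<bullet> e1) * (w2 \<bullet> e2) - (w1 \<bullet> e2) * (w2 \<bullet> e1) > 0)"

definition pos_orthonormal_frame :: "(real \<times> real \<Rightarrow> real^3) \<Rightarrow> real \<times> real \<Rightarrow> real^3 \<Rightarrow> real^3 \<Rightarrow> real^3 \<Rightarrow> real^3 \<Rightarrow> bool" where
  "pos_orthonormal_frame f q e1 e2 w1 w2 = (w1 \<in> NpM f q \<and> w2 \<in> NpM f q \<and> norm w1 = 1 \<and> norm w2 = 1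
      \<and> w1 \<bullet> w2 = 0 \<and> pos_oriented e1 e2 w1 w2)"

text \<open>Axial vector v_a (a relation, since for Delta_p = origin it is any unit vector).
  Line / half-line case: eta(y_infinity) = eta'(y)/|eta'(y)| for (all sufficiently large) y.\<close>
definition is_axial_vector :: "(real \<times> real \<Rightarrow> real^3) \<Rightarrow> real \<times> real \<Rightarrow> real^3 \<Rightarrow> real^3 \<Rightarrow> real^3 \<Rightarrow> bool" where
  "is_axial_vector f q e1 e2 va = (va \<in> NpM f q \<and> norm va = 1 \<and>
     (let S = curvature_parabola f q; deta = (\<lambda>y. vector_derivative (eta f q) (at y)) in
       (is_nd_parabola S \<and> nd_parabola_with_axis S va)
     \<or> ((is_line_set S \<or> is_halfline_set S) \<and>
          (\<forall>\<^sub>F y in at_top. deta y \<noteq> 0 \<and> va = (1 / norm (deta y)) *\<^sub>R deta y))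
     \<or> (\<exists>P. S = {P} \<and> P \<noteq> 0 \<and> pos_orthonormal_frame f q e1 e2 va ((1 / norm P) *\<^sub>R P))
     \<or> S = {0}))"

definition is_adapted_frame :: "(real \<times> real \<Rightarrow> real^3) \<Rightarrow> real \<times> real \<Rightarrow> real^3 \<Rightarrow> real^3 \<Rightarrow> real^3 \<Rightarrow> real^3 \<Rightarrow> bool" where
  "is_adapted_frame f q e1 e2 va nu2 = pos_orthonormal_frame f q e1 e2 va nu2"

definition axial_normal_curvature :: "(real \<times> real \<Rightarrow> real^3) \<Rightarrow> real \<times> real \<Rightarrow> real^3 \<Rightarrow> real \<Rightarrow> real" where
  "axial_normal_curvature f q va y = eta f q y \<bullet> va"

definition axial_curvature_defined :: "(real \<times> real \<Rightarrow> real^3) \<Rightarrow> real \<times> real \<Rightarrow> real^3 \<Rightarrow> bool" where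
  "axial_curvature_defined f q va =
     (\<exists>y0. \<forall>y. axial_normal_curvature f q va y0 \<le> axial_normal_curvature f q va y)"

definition axial_curvature :: "(real \<times> real \<Rightarrow> real^3) \<Rightarrow> real \<times> real \<Rightarrow> real^3 \<Rightarrow> real" where
  "axial_curvature f q va = Inf (range (axial_normal_curvature f q va))"

definition parallel :: "real^3 \<Rightarrow> real^3 \<Rightarrow> bool" where
  "parallel u w = (\<exists>t. u = t *\<^sub>R w)"

end

theory Submission
  imports Defs
begin

lemma setup_facts:
  fixes f :: "real \<times> real \<Rightarrow> real^3" and q :: "real \<times> real"
  assumes "smooth_germ f q"
    and "dfq f q (0, 1) = 0" and "norm (dfq f q (1, 0)) = 1"
  defines "T \<equiv> dfq f q (1,0)"
  shows "\<exists>a b c. \<forall>y. eta f q y = a + y *\<^sub>R b + (y^2) *\<^sub>R c"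
    and "\<And>w. nproj f q w = w - (w \<bullet> T) *\<^sub>R T"
    and "\<And>w. w \<in> NpM f q \<longleftrightarrow> w \<bullet> T = 0"
    and "\<And>u v. dfq f q (u,v) = u *\<^sub>R T"
proof -
  obtain U where U: "open U" "q \<in> U" "smooth_on U f"
    using assms(1) unfolding smooth_germ_def by blast
  have C2: "Ck 2 f U" using U(3) unfolding smooth_on_def by blast
  hence "f differentiable_on U" and gd: "\<And>h. (\<lambda>x. frechet_derivative f (at x) h) differentiable_on U"
    by (auto simp: numeral_2_eq_2)
  hence fdiff: "\<And>x. x \<in> U \<Longrightarrow> f differentiable at x"
    and gdiff: "\<And>h x. x \<in> U \<Longrightarrow> (\<lambda>x. frechet_derivative f (at x) h) differentiable at x"
    using U(1) differentiable_on_eq_differentiable_at by blast+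
  have lin: "\<And>x. x \<in> U \<Longrightarrow> linear (frechet_derivative f (at x))"
    using fdiff frechet_derivative_works has_derivative_linear by blast
  have decomp: "\<And>L::real\<times>real \<Rightarrow> real^3. linear L \<Longrightarrow> L (u,v) = u *\<^sub>R L (1,0) + v *\<^sub>R L (0,1)" for u v
  proof -
    fix L :: "real\<times>real \<Rightarrow> real^3" assume "linear L"
    have "(u,v) = u *\<^sub>R (1,0) + v *\<^sub>R ((0,1)::real\<times>real)" by simp
    hence "L (u,v) = L (u *\<^sub>R (1,0) + v *\<^sub>R ((0,1)::real\<times>real))" by metis
    also have "\<dots> = u *\<^sub>R L (1,0) + v *\<^sub>R L (0,1)"
      by (simp only: linear_add[OF \<open>linear L\<close>] linear_scale[OF \<open>linear L\<close>])
    finally show "L (u,v) = u *\<^sub>R L (1,0) + v *\<^sub>R L (0,1)" .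
  qed
  show dfq_eq: "\<And>u v. dfq f q (u,v) = u *\<^sub>R T"
  proof -
    fix u v show "dfq f q (u,v) = u *\<^sub>R T"
      using decomp[OF lin[OF U(2)], of u v] assms(2) unfolding T_def dfq_def by simp
  qed
  have TpM: "TpM f q = range (\<lambda>s. s *\<^sub>R T)"
    unfolding TpM_def by (auto simp: dfq_eq image_iff) 
  show Np: "\<And>w. w \<in> NpM f q \<longleftrightarrow> w \<bullet> T = 0"
    unfolding NpM_def TpM by auto
  have TT: "T \<bullet> T = 1" using assms(3) unfolding T_def by (simp add: dot_square_norm)
  show np: "\<And>w. nproj f q w = w - (w \<bullet> T) *\<^sub>R T"
  proof -
    fix w
    show "nproj f q w = w - (w \<bullet> T) *\<^sub>R T"
      unfolding nproj_def
    proof (rule the_equality)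
      show "w - (w \<bullet> T) *\<^sub>R T \<in> NpM f q \<and> w - (w - (w \<bullet> T) *\<^sub>R T) \<in> TpM f q"
        using TT by (auto simp: Np TpM inner_diff_left)
    next
      fix n assume "n \<in> NpM f q \<and> w - n \<in> TpM f q"
      then obtain s where n: "n \<bullet> T = 0" "w - n = s *\<^sub>R T" by (auto simp: Np TpM)
      hence "w = n + s *\<^sub>R T" by (simp add: algebra_simps)
      hence "w \<bullet> T = s" using n TT by (simp add: inner_add_left)
      thus "n = w - (w \<bullet> T) *\<^sub>R T" using n by (simp add: algebra_simps)
    qed
  qed
  define g where "g h x = frechet_derivative f (at x) h" for h x
  define D where "D h = frechet_derivative (g h) (at q)" for h
  have Dder: "(g h has_derivative D h) (at q)" for h
    unfolding D_def g_def using gdiff[OF U(2)] frechet_derivative_works by blast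
  have linD: "linear (D h)" for h using Dder has_derivative_linear by blast
  have D1y: "D (1,y) = (\<lambda>X. D (1,0) X + y *\<^sub>R D (0,1) X)" for y
  proof -
    have "((\<lambda>x. g (1,0) x + y *\<^sub>R g (0,1) x) has_derivative (\<lambda>X. D (1,0) X + y *\<^sub>R D (0,1) X)) (at q)"
      by (intro derivative_intros Dder)
    hence "(g (1,y) has_derivative (\<lambda>X. D (1,0) X + y *\<^sub>R D (0,1) X)) (at q)"
      by (rule has_derivative_transform_within_open[OF _ U(1) U(2)])
         (use decomp[OF lin, of _ 1 y] in \<open>simp add: g_def\<close>)
    thus ?thesis unfolding D_def by (rule frechet_derivative_at[symmetric])
  qed
  define P where "P w = w - (w \<bullet> T) *\<^sub>R T" for w
  have "eta f q y = P (D (1,0) (1,0)) + y *\<^sub>R P (D (1,0) (0,1) + D (0,1) (1,0)) + (y^2) *\<^sub>R P (D (0,1) (0,1))" for y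
  proof -
    have "eta f q y = P (D (1,y) (1,y))"
      unfolding eta_def FFII_def D2f_def np P_def D_def g_def ..
    also have "\<dots> = P (D (1,0) (1,0) + y *\<^sub>R (D (1,0) (0,1) + D (0,1) (1,0)) + (y^2) *\<^sub>R D (0,1) (0,1))"
      using decomp[OF linD, of "(1,0)" 1 y] decomp[OF linD, of "(0,1)" 1 y]
      by (simp add: D1y[of y] algebra_simps power2_eq_square)
    also have "\<dots> = P (D (1,0) (1,0)) + y *\<^sub>R P (D (1,0) (0,1) + D (0,1) (1,0)) + (y^2) *\<^sub>R P (D (0,1) (0,1))"
      unfolding P_def by (simp add: algebra_simps inner_add_left)
    finally show ?thesis .
  qed
  thus "\<exists>a b c. \<forall>y. eta f q y = a + y *\<^sub>R b + (y^2) *\<^sub>R c" by blast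
qed


lemma orth3_zero:
  fixes a b c r :: "real^3"
  assumes "norm a = 1" "norm b = 1" "norm c = 1" "a \<bullet> b = 0" "a \<bullet> c = 0" "b \<bullet> c = 0"
    and "r \<bullet> a = 0" "r \<bullet> b = 0" "r \<bullet> c = 0"
  shows "r = 0"
proof -
  have ab: "a \<noteq> b" using assms by (metis inner_zero_right norm_eq_sqrt_inner real_sqrt_zero zero_neq_one)
  have ac: "a \<noteq> c" using assms by (metis inner_zero_right norm_eq_sqrt_inner real_sqrt_zero zero_neq_one)
  have bc: "b \<noteq> c" using assms by (metis inner_zero_right norm_eq_sqrt_inner real_sqrt_zero zero_neq_one)
  let ?S = "{a,b,c}"
  have card: "card ?S = 3" using ab ac bc by simp
  have "pairwise orthogonal ?S" using assms
    by (auto simp: pairwise_def orthogonal_def inner_commute)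
  moreover have "0 \<notin> ?S" using assms by auto
  ultimately have ind: "independent ?S" by (rule pairwise_orthogonal_independent)
  have "(UNIV::(real^3) set) \<subseteq> span ?S"
    by (rule card_ge_dim_independent) (use ind card in auto)
  hence "r \<in> span ?S" by auto
  hence "orthogonal r r"
    by (rule orthogonal_to_span) (use assms in \<open>auto simp: orthogonal_def\<close>)
  thus ?thesis by (simp add: orthogonal_def)
qed

theorem mainTheorem1:
  fixes f :: "real \<times> real \<Rightarrow> real^3" and q :: "real \<times> real"
    and e1 e2 va nu2 :: "real^3"
  assumes "smooth_germ f q"
    and "rank_df f q = 1"
    and "dfq f q (0, 1) = 0" and "norm (dfq f q (1, 0)) = 1"
    and "oriented_normal_basis f q e1 e2"
    and "is_axial_vector f q e1 e2 va"
    and "is_adapted_frame f q e1 e2 va nu2"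
    and "axial_curvature_defined f q va"
  shows "axial_curvature f q va = 0 \<longleftrightarrow>
           is_point_set (curvature_parabola f q)
         \<or> (\<exists>y0. (axial_normal_curvature f q va has_real_derivative 0) (at y0)
                 \<and> parallel (eta f q y0) nu2)"
proof -
  define T where "T = dfq f q (1,0)"
  note sf = setup_facts[OF assms(1) assms(3) assms(4), folded T_def]
  obtain a b c where abc: "\<And>y. eta f q y = a + y *\<^sub>R b + (y^2) *\<^sub>R c" using sf(1) by blast
  have TT: "T \<bullet> T = 1" using assms(4) unfolding T_def by (simp add: dot_square_norm)
  have nT: "norm T = 1" using assms(4) unfolding T_def by simp
  have etaT: "eta f q y \<bullet> T = 0" for y
    unfolding eta_def FFII_def sf(2) using TT by (simp add: inner_diff_left)
  have etaS: "eta f q y \<in> curvature_parabola f q" for y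
  proof -
    have "FFI f q (1,y) (1,y) = 1" unfolding FFI_def sf(4) using TT by simp
    thus ?thesis unfolding curvature_parabola_def eta_def by blast
  qed
  have va: "va \<bullet> T = 0" "norm va = 1" "nu2 \<bullet> T = 0" "norm nu2 = 1" "va \<bullet> nu2 = 0"
    using assms(7) unfolding is_adapted_frame_def pos_orthonormal_frame_def sf(3) by auto
  define K where "K = axial_normal_curvature f q va"
  define A where "A = a \<bullet> va"
  define B where "B = b \<bullet> va"
  define C where "C = c \<bullet> va"
  have Keq: "K y = A + y * B + y^2 * C" for y
    unfolding K_def axial_normal_curvature_def abc A_def B_def C_def by (simp add: inner_add_left)
  have Kder: "(K has_real_derivative B + 2 * C * y) (at y)" for y
  proof -
    have "((\<lambda>y. A + y * B + y^2 * C) has_real_derivative B + 2 * C * y) (at y)"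
      by (auto intro!: derivative_eq_intros)
    thus ?thesis unfolding Keq[abs_def] .
  qed
  obtain y1 where y1: "\<And>y. K y1 \<le> K y"
    using assms(8) unfolding axial_curvature_defined_def K_def by blast
  have kap: "axial_curvature f q va = K y1"
    unfolding axial_curvature_def K_def[symmetric] by (rule cInf_eq_minimum) (use y1 in auto)
  have crit1: "B + 2 * C * y1 = 0"
    using DERIV_local_min[OF Kder[of y1], of 1] y1 by auto
  have Cpos: "C \<ge> 0"
  proof -
    have "K y1 \<le> K (y1 + 1)" by (rule y1)
    thus ?thesis using crit1 unfolding Keq by (simp add: algebra_simps power2_eq_square)
  qed
  show ?thesis
  proof
    assume k0: "axial_curvature f q va = 0"
    have "parallel (eta f q y1) nu2"
    proof -
      let ?w = "eta f q y1"
      have "?w \<bullet> va = 0" using k0 kap unfolding K_def axial_normal_curvature_def by simp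
      hence "?w - (?w \<bullet> nu2) *\<^sub>R nu2 = 0"
        using va etaT[of y1] nT
        by (intro orth3_zero[of va nu2 T])
           (auto simp: inner_diff_left dot_square_norm inner_commute[of nu2 va] inner_commute[of T va] inner_commute[of T nu2])
      thus ?thesis unfolding parallel_def by (metis eq_iff_diff_eq_0)
    qed
    moreover have "(K has_real_derivative 0) (at y1)" using Kder[of y1] crit1 by simp
    ultimately show "is_point_set (curvature_parabola f q)
         \<or> (\<exists>y0. (axial_normal_curvature f q va has_real_derivative 0) (at y0)
                 \<and> parallel (eta f q y0) nu2)" unfolding K_def by blast
  next
    assume "is_point_set (curvature_parabola f q)
         \<or> (\<exists>y0. (axial_normal_curvature f q va has_real_derivative 0) (at y0)
                 \<and> parallel (eta f q y0) nu2)"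
    thus "axial_curvature f q va = 0"
    proof
      assume "is_point_set (curvature_parabola f q)"
      then obtain P where SP: "curvature_parabola f q = {P}" unfolding is_point_set_def by blast
      have etaP: "eta f q y = P" for y using etaS[of y] SP by auto
      have "P \<bullet> va = 0"
      proof -
        have ax: "(is_nd_parabola {P} \<and> nd_parabola_with_axis {P} va)
           \<or> ((is_line_set {P} \<or> is_halfline_set {P}) \<and> True)
           \<or> (\<exists>P'. {P} = {P'} \<and> P' \<noteq> 0 \<and> pos_orthonormal_frame f q e1 e2 va ((1 / norm P') *\<^sub>R P'))
           \<or> {P} = {0::real^3}"
          using assms(6) unfolding is_axial_vector_def Let_def SP by blast
        have np: "\<not> nd_parabola_with_axis {P} va"
        proof
          assume "nd_parabola_with_axis {P} va"
          then obtain V d k where h: "norm d = 1" "d \<bullet> va = 0"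
            "{P} = {V + t *\<^sub>R d + (k * t\<^sup>2) *\<^sub>R va | t. True}"
            unfolding nd_parabola_with_axis_def by blast
          have "V + 0 *\<^sub>R d + (k * 0\<^sup>2) *\<^sub>R va \<in> {P}" "V + 1 *\<^sub>R d + (k * 1\<^sup>2) *\<^sub>R va \<in> {P}"
            by (subst h(3); blast)+
          hence "d + k *\<^sub>R va = 0" by simp
          hence "(d + k *\<^sub>R va) \<bullet> d = 0" by simp
          thus False using h(1,2) by (simp add: inner_add_left inner_commute[of va d] dot_square_norm)
        qed
        have nl: "\<not> is_line_set {P}"
        proof
          assume "is_line_set {P}"
          then obtain P0 d where h: "d \<noteq> 0" "{P} = {P0 + t *\<^sub>R d | t. True}"
            unfolding is_line_set_def by blast
          have "P0 + 0 *\<^sub>R d \<in> {P}" "P0 + 1 *\<^sub>R d \<in> {P}" by (subst h(2); blast)+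
          thus False using h(1) by simp
        qed
        have nh: "\<not> is_halfline_set {P}"
        proof
          assume "is_halfline_set {P}"
          then obtain P0 d where h: "d \<noteq> 0" "{P} = {P0 + t *\<^sub>R d | t. t \<ge> 0}"
            unfolding is_halfline_set_def by blast
          have "P0 + 0 *\<^sub>R d \<in> {P}" by (subst h(2)) (rule CollectI, rule exI[of _ 0], simp)
          moreover have "P0 + 1 *\<^sub>R d \<in> {P}" by (subst h(2)) (rule CollectI, rule exI[of _ 1], simp)
          ultimately show False using h(1) by simp
        qed
        from ax np nl nh show ?thesis
        proof (elim disjE)
          assume "\<exists>P'. {P} = {P'} \<and> P' \<noteq> 0 \<and> pos_orthonormal_frame f q e1 e2 va ((1 / norm P') *\<^sub>R P')"
          then have "P \<noteq> 0" "va \<bullet> ((1 / norm P) *\<^sub>R P) = 0"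
            unfolding pos_orthonormal_frame_def by auto
          thus ?thesis by (simp add: inner_commute)
        qed auto
      qed
      hence "K y = 0" for y unfolding K_def axial_normal_curvature_def etaP by simp
      thus ?thesis using kap by simp
    next
      assume "\<exists>y0. (axial_normal_curvature f q va has_real_derivative 0) (at y0)
                 \<and> parallel (eta f q y0) nu2"
      then obtain y0 t where d0: "(K has_real_derivative 0) (at y0)" and p: "eta f q y0 = t *\<^sub>R nu2"
        unfolding K_def parallel_def by blast
      have crit0: "B + 2 * C * y0 = 0" using DERIV_unique[OF Kder[of y0] d0] .
      have Ky0: "K y0 = 0" unfolding K_def axial_normal_curvature_def p using va by (simp add: inner_commute)
      have diff: "K y - K y0 = C * (y - y0)^2" for y
      proof -
        have "B = - 2 * C * y0" using crit0 by simp
        thus ?thesis unfolding Keq by (simp add: algebra_simps power2_eq_square)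
      qed
      have "K y0 \<le> K y" for y using diff[of y] Cpos by (metis diff_ge_0_iff_ge zero_le_mult_iff zero_le_power2)
      hence "axial_curvature f q va = K y0"
        unfolding axial_curvature_def K_def[symmetric] by (intro cInf_eq_minimum) auto
      thus ?thesis using Ky0 by simp
    qed
  qed
qed

end
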